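(* Let $P\in\mathbb{N}_0^{n\times n}$ be an incidence matrix that is monomial (every row and every column has exactly one non-zero entry). If two of its entries are greater than $1$, then $P$ exclusively represents reducible morphisms.
   Context: Let $\Sigma=\{a_1,\dots,a_n\}$. A morphism $\varphi:\Sigma^+\to\Sigma^+$ (non-empty images) is Parikh-positive if every letter occurs in $\varphi(a_1)\cdots\varphi(a_n)$. Its incidence matrix is $P(\varphi)=(m_{i,j})$ with $m_{i,j}=|\varphi(a_j)|_{a_i}$. An automorphism is an injective morphism mapping each letter to a single letter; a morphism is reducible if it equals $\psi_2\circ\psi_1$ with neither $\psi_1,\psi_2$ an automorphism. An incidence matrix $P$ exclusively represents reducible morphisms if every Parikh-positive morphism $\varphi$ with $P(\varphi)=P$ is reducible. *)

theory Defs
  imports Main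
begin

text \<open>Alphabet: a finite type 'a (letters a_1..a_n). A morphism of the free semigroup
  is determined by the images of the letters; images must be non-empty words.\<close>

definition morphism :: "('a \<Rightarrow> 'a list) \<Rightarrow> bool" where
  "morphism f \<longleftrightarrow> (\<forall>a. f a \<noteq> [])"

definition morph_comp :: "('a \<Rightarrow> 'a list) \<Rightarrow> ('a \<Rightarrow> 'a list) \<Rightarrow> ('a \<Rightarrow> 'a list)" where
  "morph_comp psi2 psi1 = (\<lambda>a. concat (map psi2 (psi1 a)))"

text \<open>Every letter occurs in phi(a_1)...phi(a_n), i.e. in some image phi(a).\<close>
definition parikh_positive :: "('a \<Rightarrow> 'a list) \<Rightarrow> bool" where
  "parikh_positive f \<longleftrightarrow> (\<forall>b. \<exists>a. b \<in> set (f a))"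

definition incidence :: "('a \<Rightarrow> 'a list) \<Rightarrow> 'a \<Rightarrow> 'a \<Rightarrow> nat" where
  "incidence f = (\<lambda>i j. count_list (f j) i)"

definition automorphism :: "('a \<Rightarrow> 'a list) \<Rightarrow> bool" where
  "automorphism f \<longleftrightarrow> (\<forall>a. length (f a) = 1) \<and> inj (\<lambda>a. hd (f a))"

definition reducible :: "('a \<Rightarrow> 'a list) \<Rightarrow> bool" where
  "reducible f \<longleftrightarrow> (\<exists>psi1 psi2. morphism psi1 \<and> morphism psi2 \<and>
      f = morph_comp psi2 psi1 \<and> \<not> automorphism psi1 \<and> \<not> automorphism psi2)"

definition exclusively_reducible :: "('a \<Rightarrow> 'a \<Rightarrow> nat) \<Rightarrow> bool" where
  "exclusively_reducible P \<longleftrightarrow>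
     (\<forall>f. morphism f \<and> parikh_positive f \<and> incidence f = P \<longrightarrow> reducible f)"

definition monomial_matrix :: "('a \<Rightarrow> 'a \<Rightarrow> nat) \<Rightarrow> bool" where
  "monomial_matrix P \<longleftrightarrow> (\<forall>i. \<exists>!j. P i j \<noteq> 0) \<and> (\<forall>j. \<exists>!i. P i j \<noteq> 0)"

end

theory Submission
  imports Defs
begin

lemma single_letter:
  assumes u: "\<exists>!i. count_list xs i \<noteq> 0"
  shows "xs = replicate (length xs) (hd xs)"
proof -
  from u obtain i where i: "count_list xs i \<noteq> 0" and un: "\<And>y. count_list xs y \<noteq> 0 \<Longrightarrow> y = i" by blast
  have "\<forall>y\<in>set xs. y = i" using un by (simp add: count_list_0_iff)
  moreover have "xs \<noteq> []" using i by auto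
  ultimately have "\<forall>y\<in>set xs. y = hd xs" by (metis list.set_sel(1))
  thus ?thesis by (metis replicate_length_same)
qed

lemma cr: "concat (replicate n [x]) = replicate n x"
  by (induct n) auto

theorem proposition19:
  fixes P :: "'a::finite \<Rightarrow> 'a \<Rightarrow> nat"
  assumes "monomial_matrix P"
    and "(i, j) \<noteq> (k, l)" and "P i j > 1" and "P k l > 1"
  shows "exclusively_reducible P"
  unfolding exclusively_reducible_def
proof (intro allI impI)
  fix f :: "'a \<Rightarrow> 'a list"
  assume H: "morphism f \<and> parikh_positive f \<and> incidence f = P"
  hence Pf: "P = (\<lambda>i j. count_list (f j) i)" and ne: "\<And>a. f a \<noteq> []"
    by (auto simp: incidence_def morphism_def)
  have col: "\<And>a. \<exists>!i. count_list (f a) i \<noteq> 0" using assms(1) Pf by (simp add: monomial_matrix_def)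
  have rep: "\<And>a. f a = replicate (length (f a)) (hd (f a))" using col by (rule single_letter)
  have jl: "j \<noteq> l"
  proof
    assume "j = l"
    hence "i \<noteq> k" using assms(2) by simp
    moreover have "count_list (f j) i \<noteq> 0" "count_list (f j) k \<noteq> 0"
      using assms(3,4) Pf \<open>j = l\<close> by auto
    ultimately show False using col[of j] by blast
  qed
  have lj: "length (f j) > 1" using assms(3) Pf count_le_length[of "f j" i] by simp
  have ll: "length (f l) > 1" using assms(4) Pf count_le_length[of "f l" k] by simp
  define psi1 where "psi1 = (\<lambda>a. if a = l then [a] else replicate (length (f a)) a)"
  define psi2 where "psi2 = (\<lambda>a. if a = l then f l else [hd (f a)])"
  have m1: "morphism psi1" using ne by (simp add: psi1_def morphism_def)
  have m2: "morphism psi2" using ne by (simp add: psi2_def morphism_def)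
  have "length (psi1 j) = length (f j)" using jl by (simp add: psi1_def)
  hence n1: "\<not> automorphism psi1" unfolding automorphism_def using lj by auto
  have "length (psi2 l) = length (f l)" by (simp add: psi2_def)
  hence n2: "\<not> automorphism psi2" unfolding automorphism_def using ll by auto
  have "f = morph_comp psi2 psi1"
  proof
    fix a
    show "f a = morph_comp psi2 psi1 a"
    proof (cases "a = l")
      case True thus ?thesis by (simp add: morph_comp_def psi1_def psi2_def)
    next
      case False
      have "morph_comp psi2 psi1 a = concat (replicate (length (f a)) [hd (f a)])"
        using False by (simp add: morph_comp_def psi1_def psi2_def)
      also have "\<dots> = replicate (length (f a)) (hd (f a))"
        by (rule cr)
      finally show ?thesis using rep[of a] by simp
    qed
  qed
  thus "reducible f" unfolding reducible_def using m1 m2 n1 n2 by blast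
qed

end
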